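(* Fix $\gamma>0$. For every compactly supported Borel probability measure $\nu$ on $\mathbb R$, \[\operatorname*{arg\,min}_{\mu}H_\gamma(\nu,\mu)=\{\nu\},\] where $\mu$ ranges over compactly supported Borel probability measures on $\mathbb R$.
   Context: $G_\mu(z)=\int\frac{\mu(dt)}{z-t}$. $P_\gamma(x)=\frac{\gamma}{\pi(x^2+\gamma^2)}$, $(P_\gamma*\nu)(x)=\int P_\gamma(x-t)\nu(dt)$. For a compactly supported Borel probability measure $\mu$ and a Borel probability measure $\nu$ with finite second moment, the Cauchy cross-entropy is $H_\gamma(\nu,\mu)=\int\ell_\gamma(x,\mu)(P_\gamma*\nu)(x)\,dx$, where $\ell_\gamma(x,\mu)=-\log[-\frac1\pi\operatorname{Im}G_\mu(x+i\gamma)]$ (equivalently $H_\gamma(\nu,\mu)=-\int(P_\gamma*\nu)\log(P_\gamma*\mu)\,dx$). $\operatorname{arg\,min}$ denotes the set of minimizers. *)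

theory Defs
  imports "HOL-Probability.Probability"
begin

definition cs_prob :: "real measure set" where
  "cs_prob = {\<mu>. sets \<mu> = sets borel \<and> prob_space \<mu> \<and>
                 (\<exists>K. compact K \<and> emeasure \<mu> K = 1)}"

definition cauchy_transform :: "real measure \<Rightarrow> complex \<Rightarrow> complex" where
  "cauchy_transform \<mu> z = (\<integral>t. 1 / (z - complex_of_real t) \<partial>\<mu>)"

definition poisson_kernel :: "real \<Rightarrow> real \<Rightarrow> real" where
  "poisson_kernel \<gamma> x = \<gamma> / (pi * (x\<^sup>2 + \<gamma>\<^sup>2))"

definition poisson_conv :: "real \<Rightarrow> real measure \<Rightarrow> real \<Rightarrow> real" where
  "poisson_conv \<gamma> \<nu> x = (\<integral>t. poisson_kernel \<gamma> (x - t) \<partial>\<nu>)"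

definition cauchy_loss :: "real \<Rightarrow> real \<Rightarrow> real measure \<Rightarrow> real" where
  "cauchy_loss \<gamma> x \<mu> = - ln (- (1 / pi) * Im (cauchy_transform \<mu> (Complex x \<gamma>)))"

definition cauchy_cross_entropy :: "real \<Rightarrow> real measure \<Rightarrow> real measure \<Rightarrow> real" where
  "cauchy_cross_entropy \<gamma> \<nu> \<mu> =
     (\<integral>x. cauchy_loss \<gamma> x \<mu> * poisson_conv \<gamma> \<nu> x \<partial>lborel)"

end

theory Submission
  imports Defs "HOL-Probability.Sinc_Integral" "HOL-Real_Asymp.Real_Asymp"
begin


lemma cs_prob_bounded:
  assumes "\<mu> \<in> cs_prob"
  shows "\<exists>R>0. AE t in \<mu>. \<bar>t\<bar> \<le> R"
proof -
  from assms obtain K where sets: "sets \<mu> = sets borel" and ps: "prob_space \<mu>"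
    and K: "compact K" "emeasure \<mu> K = 1" unfolding cs_prob_def by auto
  interpret prob_space \<mu> by fact
  obtain R where R: "R > 0" "\<And>x. x \<in> K \<Longrightarrow> norm x \<le> R"
    using compact_imp_bounded[OF K(1)] bounded_pos by blast
  have Km: "K \<in> sets \<mu>" using sets K(1) by (simp add: compact_imp_closed)
  have "AE t in \<mu>. t \<in> K"
    using K(2) Km AE_in_set_eq_1 by (simp add: emeasure_eq_measure)
  then have "AE t in \<mu>. \<bar>t\<bar> \<le> R" by eventually_elim (use R in auto)
  with R show ?thesis by blast
qed




lemma den_pos: "(\<gamma>::real) > 0 \<Longrightarrow> 0 < (y::real)\<^sup>2 + \<gamma>\<^sup>2"
  by (intro add_nonneg_pos) auto

lemma pk_pos: "\<gamma> > 0 \<Longrightarrow> 0 < poisson_kernel \<gamma> y"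
  unfolding poisson_kernel_def using den_pos[of \<gamma> y] by simp

lemma pk_le: assumes "\<gamma> > 0" shows "poisson_kernel \<gamma> y \<le> 1 / (pi * \<gamma>)"
proof -
  have "\<gamma>\<^sup>2 \<le> y\<^sup>2 + \<gamma>\<^sup>2" by simp
  hence "\<gamma> / (pi * (y\<^sup>2 + \<gamma>\<^sup>2)) \<le> \<gamma> / (pi * \<gamma>\<^sup>2)"
    using assms den_pos[OF assms, of y] by (intro divide_left_mono mult_left_mono) (auto intro!: mult_pos_pos)
  also have "\<dots> = 1 / (pi * \<gamma>)" using assms by (simp add: power2_eq_square)
  finally show ?thesis unfolding poisson_kernel_def .
qed

lemma pk_measurable[measurable]: "poisson_kernel \<gamma> \<in> borel_measurable borel"
  unfolding poisson_kernel_def by measurable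

lemma pk_cont: "\<gamma> > 0 \<Longrightarrow> continuous_on UNIV (poisson_kernel \<gamma>)"
  unfolding poisson_kernel_def
  by (intro continuous_intros) (auto simp: add_pos_pos)

lemma im_kernel:
  "Im (1 / (Complex x \<gamma> - complex_of_real t)) = - \<gamma> / ((x - t)\<^sup>2 + \<gamma>\<^sup>2)"
proof -
  have "Complex x \<gamma> - complex_of_real t = Complex (x - t) \<gamma>"
    by (simp add: complex_eq_iff)
  then show ?thesis by (simp add: Im_divide power2_eq_square)
qed

locale csp =
  fixes \<gamma> :: real and \<mu> :: "real measure"
  assumes gpos: "\<gamma> > 0" and mem: "\<mu> \<in> cs_prob"
begin

lemma ps: "prob_space \<mu>" and sets_eq[measurable_cong]: "sets \<mu> = sets borel"
  using mem unfolding cs_prob_def by auto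

sublocale prob_space \<mu> by (rule ps)

lemma space_eq: "space \<mu> = UNIV"
  using sets_eq_imp_space_eq[OF sets_eq] by simp

lemma pk_integrable: "integrable \<mu> (\<lambda>t. poisson_kernel \<gamma> (x - t))"
proof (rule integrable_const_bound[where B="1/(pi*\<gamma>)"])
  show "AE t in \<mu>. norm (poisson_kernel \<gamma> (x - t)) \<le> 1 / (pi * \<gamma>)"
    using pk_le[OF gpos] pk_pos[OF gpos] by (simp add: less_imp_le)
  show "(\<lambda>t. poisson_kernel \<gamma> (x - t)) \<in> borel_measurable \<mu>" by measurable
qed

definition R where "R = (SOME R. R > 0 \<and> (AE t in \<mu>. \<bar>t\<bar> \<le> R))"

lemma R: "R > 0" "AE t in \<mu>. \<bar>t\<bar> \<le> R"
  using someI_ex[OF cs_prob_bounded[OF mem]] unfolding R_def by auto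

lemma pc_lower: "\<gamma> / (pi * ((\<bar>x\<bar> + R)\<^sup>2 + \<gamma>\<^sup>2)) \<le> poisson_conv \<gamma> \<mu> x"
proof -
  have "(\<integral>t. \<gamma> / (pi * ((\<bar>x\<bar> + R)\<^sup>2 + \<gamma>\<^sup>2)) \<partial>\<mu>) \<le> (\<integral>t. poisson_kernel \<gamma> (x - t) \<partial>\<mu>)"
  proof (rule integral_mono_AE[OF _ pk_integrable])
    show "AE t in \<mu>. \<gamma> / (pi * ((\<bar>x\<bar> + R)\<^sup>2 + \<gamma>\<^sup>2)) \<le> poisson_kernel \<gamma> (x - t)"
      using R(2)
    proof eventually_elim
      case (elim t)
      have h: "\<bar>x - t\<bar> \<le> \<bar>\<bar>x\<bar> + R\<bar>" using elim R(1) by linarith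
      have "(x - t)\<^sup>2 \<le> (\<bar>x\<bar> + R)\<^sup>2"
        using h abs_le_square_iff by blast
      then show ?case unfolding poisson_kernel_def using gpos
        by (intro divide_left_mono mult_left_mono mult_pos_pos add_nonneg_pos) auto
    qed
  qed auto
  then show ?thesis unfolding poisson_conv_def by (simp add: prob_space)
qed

lemma pc_pos: "0 < poisson_conv \<gamma> \<mu> x"
  by (rule less_le_trans[OF _ pc_lower]) (use gpos in \<open>intro divide_pos_pos mult_pos_pos add_nonneg_pos, auto\<close>)

lemma pc_upper: "poisson_conv \<gamma> \<mu> x \<le> 1 / (pi * \<gamma>)"
proof -
  have "(\<integral>t. poisson_kernel \<gamma> (x - t) \<partial>\<mu>) \<le> (\<integral>t. 1 / (pi * \<gamma>) \<partial>\<mu>)"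
    by (rule integral_mono[OF pk_integrable]) (auto intro: pk_le[OF gpos])
  then show ?thesis unfolding poisson_conv_def by (simp add: prob_space)
qed

definition Cd where "Cd = 2 * \<gamma> * (1 + R\<^sup>2) / (pi * min 1 (\<gamma>\<^sup>2))"

lemma Cd_pos: "Cd > 0"
  unfolding Cd_def using gpos by (intro divide_pos_pos mult_pos_pos) (auto intro: add_pos_nonneg)

lemma pk_decay:
  assumes t: "\<bar>t\<bar> \<le> R"
  shows "poisson_kernel \<gamma> (x - t) \<le> Cd / (1 + x\<^sup>2)"
proof -
  define m where "m = min 1 (\<gamma>\<^sup>2)"
  have m: "m > 0" "m \<le> 1" "m \<le> \<gamma>\<^sup>2" using gpos unfolding m_def by auto
  have a: "1 + x\<^sup>2 \<le> 2 * (1 + t\<^sup>2) * (1 + (x - t)\<^sup>2)"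
  proof -
    have "x\<^sup>2 \<le> 2 * (x - t)\<^sup>2 + 2 * t\<^sup>2"
      using sum_squares_ge_zero[of "x - 2*t" 0] by (simp add: power2_eq_square algebra_simps)
    moreover have "0 \<le> t\<^sup>2 * (x - t)\<^sup>2" by simp
    moreover have "2 * (1 + t\<^sup>2) * (1 + (x - t)\<^sup>2) = 2 + 2*t\<^sup>2 + 2*(x-t)\<^sup>2 + 2*(t\<^sup>2*(x-t)\<^sup>2)"
      by (simp add: algebra_simps)
    ultimately show ?thesis by linarith
  qed
  have b: "m * (1 + (x - t)\<^sup>2) \<le> (x - t)\<^sup>2 + \<gamma>\<^sup>2"
    using m mult_right_mono[OF m(2), of "(x-t)\<^sup>2"] by (simp add: algebra_simps)
  have c: "1 + t\<^sup>2 \<le> 1 + R\<^sup>2" using t R(1) abs_le_square_iff[of t R] by simp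
  have "m * (1 + x\<^sup>2) \<le> m * (2 * (1 + t\<^sup>2) * (1 + (x - t)\<^sup>2))"
    using a m by simp
  also have "\<dots> = 2 * (1 + t\<^sup>2) * (m * (1 + (x - t)\<^sup>2))" by simp
  also have "\<dots> \<le> 2 * (1 + R\<^sup>2) * ((x - t)\<^sup>2 + \<gamma>\<^sup>2)"
    using b c m by (intro mult_mono) auto
  finally have d: "m * (1 + x\<^sup>2) \<le> 2 * (1 + R\<^sup>2) * ((x - t)\<^sup>2 + \<gamma>\<^sup>2)" .
  have pos1: "0 < (x - t)\<^sup>2 + \<gamma>\<^sup>2" using gpos by (intro add_nonneg_pos) auto
  have pos2: "0 < 1 + x\<^sup>2" by (intro add_pos_nonneg) auto
  define A where "A = 2 * (1 + R\<^sup>2)"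
  define D where "D = (x - t)\<^sup>2 + \<gamma>\<^sup>2"
  have Apos: "A > 0" unfolding A_def by (simp add: add_pos_nonneg)
  have "1 / D = A / (A * D)" using Apos pos1 unfolding D_def by simp
  also have "\<dots> \<le> A / (m * (1 + x\<^sup>2))"
    using d Apos pos2 m(1) unfolding A_def[symmetric] D_def[symmetric]
    by (intro frac_le) auto
  finally have e: "1 / D \<le> A / (m * (1 + x\<^sup>2))" .
  have "poisson_kernel \<gamma> (x - t) = (\<gamma> / pi) * (1 / D)"
    unfolding poisson_kernel_def D_def by simp
  also have "\<dots> \<le> (\<gamma> / pi) * (A / (m * (1 + x\<^sup>2)))"
    using e gpos by (intro mult_left_mono) auto
  also have "\<dots> = Cd / (1 + x\<^sup>2)"
    unfolding Cd_def A_def m_def by (simp add: field_simps)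
  finally show ?thesis .
qed

lemma pc_decay: "poisson_conv \<gamma> \<mu> x \<le> Cd / (1 + x\<^sup>2)"
proof -
  have "(\<integral>t. poisson_kernel \<gamma> (x - t) \<partial>\<mu>) \<le> (\<integral>t. Cd / (1 + x\<^sup>2) \<partial>\<mu>)"
    by (rule integral_mono_AE[OF pk_integrable]) (use R(2) pk_decay in auto)
  then show ?thesis unfolding poisson_conv_def by (simp add: prob_space)
qed

lemma pc_measurable[measurable]: "poisson_conv \<gamma> \<mu> \<in> borel_measurable borel"
  unfolding poisson_conv_def by measurable

lemma loss_eq: "cauchy_loss \<gamma> x \<mu> = - ln (poisson_conv \<gamma> \<mu> x)"
proof -
  have int: "integrable \<mu> (\<lambda>t. 1 / (Complex x \<gamma> - complex_of_real t))"
  proof (rule integrable_const_bound[where B="1/\<gamma>"])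
    show "AE t in \<mu>. norm (1 / (Complex x \<gamma> - complex_of_real t)) \<le> 1 / \<gamma>"
    proof (intro AE_I2)
      fix t
      have "\<gamma> \<le> norm (Complex x \<gamma> - complex_of_real t)"
        using abs_Im_le_cmod[of "Complex x \<gamma> - complex_of_real t"] gpos by simp
      then show "norm (1 / (Complex x \<gamma> - complex_of_real t)) \<le> 1 / \<gamma>"
        using gpos by (simp add: norm_divide divide_simps)
    qed
  qed measurable
  have "Im (cauchy_transform \<mu> (Complex x \<gamma>)) = (\<integral>t. Im (1 / (Complex x \<gamma> - complex_of_real t)) \<partial>\<mu>)"
    unfolding cauchy_transform_def using int by simp
  also have "\<dots> = (\<integral>t. - pi * poisson_kernel \<gamma> (x - t) \<partial>\<mu>)"
    unfolding im_kernel poisson_kernel_def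
    apply (rule Bochner_Integration.integral_cong[OF refl])
    subgoal for t by simp
    done
  also have "\<dots> = - pi * poisson_conv \<gamma> \<mu> x"
    unfolding poisson_conv_def by simp
  finally show ?thesis unfolding cauchy_loss_def by simp
qed

end




lemma inv_sq_int: "integrable lborel (\<lambda>u::real. inverse (1 + u\<^sup>2))"
  and inv_sq_val: "(\<integral>u. inverse (1 + u\<^sup>2) \<partial>lborel) = pi"
  using integrable_inverse_1_plus_square LBINT_inverse_1_plus_square
  by (simp_all add: set_integrable_def interval_lebesgue_integral_def set_lebesgue_integral_def)

lemma pk_alt: "\<gamma> > 0 \<Longrightarrow> poisson_kernel \<gamma> (\<gamma> * u) = inverse (1 + u\<^sup>2) / (pi * \<gamma>)"
proof -
  assume g: "\<gamma> > 0"
  have e: "pi * ((\<gamma>*u)\<^sup>2 + \<gamma>\<^sup>2) = \<gamma> * (pi*\<gamma>*(1+u\<^sup>2))"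
    by (simp add: algebra_simps power2_eq_square)
  have p: "1 + u\<^sup>2 > 0" by (intro add_pos_nonneg) auto
  have "poisson_kernel \<gamma> (\<gamma> * u) = 1 / (pi*\<gamma>*(1+u\<^sup>2))"
    unfolding poisson_kernel_def e using g by (simp add: nonzero_divide_mult_cancel_left)
  also have "\<dots> = inverse (1 + u\<^sup>2) / (pi * \<gamma>)" by (simp add: field_simps)
  finally show ?thesis .
qed

lemma pk_int: assumes "\<gamma> > 0" shows "integrable lborel (poisson_kernel \<gamma>)"
proof -
  have "integrable lborel (\<lambda>u. inverse (1 + u\<^sup>2) / (pi * \<gamma>))"
    using inv_sq_int by simp
  then have "integrable lborel (\<lambda>u. poisson_kernel \<gamma> (0 + \<gamma> * u))"
    using pk_alt[OF assms] by simp
  then show ?thesis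
    using lborel_integrable_real_affine_iff[of \<gamma> "poisson_kernel \<gamma>" 0] assms by simp
qed

lemma pk_integral: assumes "\<gamma> > 0" shows "(\<integral>y. poisson_kernel \<gamma> y \<partial>lborel) = 1"
proof -
  have "(\<integral>y. poisson_kernel \<gamma> y \<partial>lborel) = \<bar>\<gamma>\<bar> *\<^sub>R (\<integral>u. poisson_kernel \<gamma> (0 + \<gamma> * u) \<partial>lborel)"
    using assms by (intro lborel_integral_real_affine) simp
  also have "\<dots> = \<gamma> * (\<integral>u. inverse (1 + u\<^sup>2) / (pi * \<gamma>) \<partial>lborel)"
    using assms pk_alt[OF assms] by simp
  also have "\<dots> = 1" using assms inv_sq_val by simp
  finally show ?thesis .
qed

lemma pk_shift_int: "\<gamma> > 0 \<Longrightarrow> integrable lborel (\<lambda>x. poisson_kernel \<gamma> (x - t))"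
  using lborel_integrable_real_affine[OF pk_int, of \<gamma> 1 "-t"] by simp

lemma pk_shift_integral: assumes "\<gamma> > 0" shows "(\<integral>x. poisson_kernel \<gamma> (x - t) \<partial>lborel) = 1"
proof -
  have "(\<integral>y. poisson_kernel \<gamma> y \<partial>lborel) = \<bar>1\<bar> *\<^sub>R (\<integral>x. poisson_kernel \<gamma> (-t + 1 * x) \<partial>lborel)"
    by (intro lborel_integral_real_affine) simp
  then show ?thesis using pk_integral[OF assms] by simp
qed

lemma pk_shift_nn: assumes "\<gamma> > 0" shows "(\<integral>\<^sup>+x. ennreal (poisson_kernel \<gamma> (x - t)) \<partial>lborel) = 1"
  using nn_integral_eq_integral[OF pk_shift_int[OF assms], of t] pk_shift_integral[OF assms]
    pk_pos[OF assms] by (simp add: less_imp_le)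

context csp begin

lemma pc_nn: "ennreal (poisson_conv \<gamma> \<mu> x) = (\<integral>\<^sup>+t. ennreal (poisson_kernel \<gamma> (x - t)) \<partial>\<mu>)"
  unfolding poisson_conv_def
  using nn_integral_eq_integral[OF pk_integrable] pk_pos[OF gpos] by (simp add: less_imp_le)

lemma pc_nn_total: "(\<integral>\<^sup>+x. ennreal (poisson_conv \<gamma> \<mu> x) \<partial>lborel) = 1"
proof -
  interpret pair_sigma_finite lborel \<mu> by unfold_locales
  have "(\<integral>\<^sup>+x. ennreal (poisson_conv \<gamma> \<mu> x) \<partial>lborel)
      = (\<integral>\<^sup>+x. (\<integral>\<^sup>+t. ennreal (poisson_kernel \<gamma> (x - t)) \<partial>\<mu>) \<partial>lborel)"
    by (simp add: pc_nn)
  also have "\<dots> = (\<integral>\<^sup>+t. (\<integral>\<^sup>+x. ennreal (poisson_kernel \<gamma> (x - t)) \<partial>lborel) \<partial>\<mu>)"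
    by (rule Fubini'[symmetric]) measurable
  also have "\<dots> = (\<integral>\<^sup>+t. 1 \<partial>\<mu>)" by (simp add: pk_shift_nn[OF gpos])
  also have "\<dots> = 1" by (simp add: emeasure_space_1)
  finally show ?thesis .
qed

lemma pc_int: "integrable lborel (poisson_conv \<gamma> \<mu>)"
  by (rule integrableI_nn_integral_finite[OF _ _ pc_nn_total[unfolded ennreal_1[symmetric]]])
     (auto intro: less_imp_le pc_pos)

lemma pc_integral: "(\<integral>x. poisson_conv \<gamma> \<mu> x \<partial>lborel) = 1"
  using has_bochner_integral_nn_integral[OF _ _ _ pc_nn_total[unfolded ennreal_1[symmetric]]]
    pc_pos by (auto intro: less_imp_le has_bochner_integral_integral_eq)

end




definition hfun :: "real \<Rightarrow> real \<Rightarrow> real" where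
  "hfun B u = (B + 2 * ln (1 + u)) / (1 + u)\<^sup>2"

lemma hfun_nonneg: "B \<ge> 0 \<Longrightarrow> u \<ge> 0 \<Longrightarrow> hfun B u \<ge> 0"
  unfolding hfun_def by auto

lemma hfun_nn_half:
  assumes B: "B \<ge> 0"
  shows "(\<integral>\<^sup>+u. ennreal (hfun B u) * indicator {0..} u \<partial>lborel) = ennreal (B + 2)"
proof -
  define F where "F u = - (B + 2 + 2 * ln (1 + u)) / (1 + u)" for u :: real
  have "(\<integral>\<^sup>+u. ennreal (hfun B u) * indicator {0..} u \<partial>lborel) = 0 - F 0"
  proof (rule nn_integral_FTC_atLeast)
    show "hfun B \<in> borel_measurable borel" unfolding hfun_def by measurable
    show "DERIV F x :> hfun B x" if "0 \<le> x" for x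
    proof -
      have p: "1 + x > 0" using that by simp
      have q: "(2 + 2*x)/(1+x) = 2" using p by (simp add: field_simps)
      show ?thesis unfolding F_def hfun_def using p
        by (auto intro!: derivative_eq_intros simp: q power2_eq_square)
    qed
    show "0 \<le> hfun B x" if "0 \<le> x" for x using hfun_nonneg[OF B that] .
    show "(F \<longlongrightarrow> 0) at_top" unfolding F_def by real_asymp
  qed
  also have "0 - F 0 = B + 2" unfolding F_def by simp
  finally show ?thesis .
qed

definition gfun :: "real \<Rightarrow> real \<Rightarrow> real" where
  "gfun B x = hfun B \<bar>x\<bar>"

lemma gfun_int: assumes B: "B \<ge> 0" shows "integrable lborel (gfun B)"
proof (rule integrableI_bounded)
  show m: "gfun B \<in> borel_measurable lborel" unfolding gfun_def hfun_def by measurable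
  have hm[measurable]: "hfun B \<in> borel_measurable borel" unfolding hfun_def by measurable
  have "(\<integral>\<^sup>+x. ennreal (norm (gfun B x)) \<partial>lborel)
     \<le> (\<integral>\<^sup>+x. ennreal (hfun B x) * indicator {0..} x + ennreal (hfun B (-x)) * indicator {0..} (-x) \<partial>lborel)"
    by (intro nn_integral_mono)
       (auto simp: gfun_def hfun_nonneg[OF B] split: split_indicator)
  also have "\<dots> = (\<integral>\<^sup>+x. ennreal (hfun B x) * indicator {0..} x \<partial>lborel)
                 + (\<integral>\<^sup>+x. ennreal (hfun B (-x)) * indicator {0..} (-x) \<partial>lborel)"
    by (intro nn_integral_add) auto
  also have "(\<integral>\<^sup>+x. ennreal (hfun B (-x)) * indicator {0..} (-x) \<partial>lborel)
           = (\<integral>\<^sup>+x. ennreal (hfun B x) * indicator {0..} x \<partial>lborel)"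
    using nn_integral_real_affine[of "\<lambda>x. ennreal (hfun B x) * indicator {0..} x" "-1" 0]
    by simp
  finally show "(\<integral>\<^sup>+x. ennreal (norm (gfun B x)) \<partial>lborel) < \<infinity>"
    using hfun_nn_half[OF B] by (auto simp: ennreal_plus[symmetric] simp del: ennreal_plus
      intro: le_less_trans)
qed

lemma ln_abs_le:
  fixes L y U :: real
  assumes "0 < L" "L \<le> y" "y \<le> U"
  shows "\<bar>ln y\<bar> \<le> \<bar>ln U\<bar> + \<bar>ln L\<bar>"
proof -
  have "0 < y" using assms by linarith
  moreover have "0 < U" using assms by linarith
  ultimately have "ln L \<le> ln y" "ln y \<le> ln U" using assms by simp_all
  then show ?thesis by linarith
qed

context csp begin

definition Aconst where "Aconst = (1 + R)\<^sup>2 + \<gamma>\<^sup>2"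

lemma Aconst_pos: "Aconst > 0" unfolding Aconst_def using gpos by (intro add_nonneg_pos) auto

lemma pc_lower2: "\<gamma> / (pi * Aconst) / (1 + \<bar>x\<bar>)\<^sup>2 \<le> poisson_conv \<gamma> \<mu> x"
proof -
  have a: "\<bar>x\<bar> + R \<le> (1 + R) * (1 + \<bar>x\<bar>)" using R(1) by (simp add: algebra_simps)
  have "(\<bar>x\<bar> + R)\<^sup>2 \<le> ((1 + R) * (1 + \<bar>x\<bar>))\<^sup>2"
    using a R(1) by (intro power_mono) auto
  also have "\<dots> = (1 + R)\<^sup>2 * (1 + \<bar>x\<bar>)\<^sup>2" by (simp add: power_mult_distrib)
  finally have c1: "(\<bar>x\<bar> + R)\<^sup>2 \<le> (1 + R)\<^sup>2 * (1 + \<bar>x\<bar>)\<^sup>2" .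
  moreover have "\<gamma>\<^sup>2 \<le> \<gamma>\<^sup>2 * (1 + \<bar>x\<bar>)\<^sup>2"
    using mult_left_mono[of 1 "(1 + \<bar>x\<bar>)\<^sup>2" "\<gamma>\<^sup>2"] one_le_power[of "1 + \<bar>x\<bar>" 2] by simp
  with c1 have b: "(\<bar>x\<bar> + R)\<^sup>2 + \<gamma>\<^sup>2 \<le> Aconst * (1 + \<bar>x\<bar>)\<^sup>2"
    unfolding Aconst_def distrib_right by linarith
  have e: "\<gamma> / (pi * Aconst) / (1 + \<bar>x\<bar>)\<^sup>2 = \<gamma> / (pi * (Aconst * (1 + \<bar>x\<bar>)\<^sup>2))" by simp
  have f: "\<gamma> / (pi * (Aconst * (1 + \<bar>x\<bar>)\<^sup>2)) \<le> \<gamma> / (pi * ((\<bar>x\<bar> + R)\<^sup>2 + \<gamma>\<^sup>2))"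
    using b gpos den_pos[OF gpos, of "\<bar>x\<bar> + R"] Aconst_pos
    by (intro divide_left_mono mult_left_mono mult_pos_pos) auto
  show ?thesis using e f pc_lower[of x] by linarith
qed

definition Bconst where "Bconst = \<bar>ln (1 / (pi * \<gamma>))\<bar> + \<bar>ln (\<gamma> / (pi * Aconst))\<bar>"


lemma ln_pc_bound: "\<bar>ln (poisson_conv \<gamma> \<mu> x)\<bar> \<le> Bconst + 2 * ln (1 + \<bar>x\<bar>)"
proof -
  have L: "0 < \<gamma> / (pi * Aconst) / (1 + \<bar>x\<bar>)\<^sup>2" using gpos Aconst_pos by simp
  have "\<bar>ln (poisson_conv \<gamma> \<mu> x)\<bar> \<le> \<bar>ln (1 / (pi * \<gamma>))\<bar> + \<bar>ln (\<gamma> / (pi * Aconst) / (1 + \<bar>x\<bar>)\<^sup>2)\<bar>"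
    by (rule ln_abs_le[OF L pc_lower2 pc_upper])
  also have "ln (\<gamma> / (pi * Aconst) / (1 + \<bar>x\<bar>)\<^sup>2) = ln (\<gamma> / (pi * Aconst)) - 2 * ln (1 + \<bar>x\<bar>)"
  proof -
    have p1: "0 < \<gamma> / (pi * Aconst)" using gpos Aconst_pos by simp
    have p2: "0 < (1 + \<bar>x\<bar>)\<^sup>2" by simp
    have e1: "ln (\<gamma> / (pi * Aconst) / (1 + \<bar>x\<bar>)\<^sup>2) = ln (\<gamma> / (pi * Aconst)) - ln ((1 + \<bar>x\<bar>)\<^sup>2)"
      using p1 p2 by (subst ln_div) auto
    show ?thesis unfolding e1 using ln_realpow[of "1 + \<bar>x\<bar>" 2] by simp
  qed
  also have "\<bar>ln (\<gamma> / (pi * Aconst)) - 2 * ln (1 + \<bar>x\<bar>)\<bar> \<le> \<bar>ln (\<gamma> / (pi * Aconst))\<bar> + 2 * ln (1 + \<bar>x\<bar>)"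
    using abs_triangle_ineq4[of "ln (\<gamma> / (pi * Aconst))" "2 * ln (1 + \<bar>x\<bar>)"] ln_ge_zero[of "1 + \<bar>x\<bar>"]
    by simp
  finally show ?thesis unfolding Bconst_def by simp
qed

lemma pc_decay2: "poisson_conv \<gamma> \<mu> x \<le> 2 * Cd * (1 / (1 + \<bar>x\<bar>)\<^sup>2)"
proof -
  have a: "(1 + \<bar>x\<bar>)\<^sup>2 \<le> 2 * (1 + x\<^sup>2)"
    using sum_squares_ge_zero[of "1 - \<bar>x\<bar>" 0] by (simp add: power2_eq_square algebra_simps)
  have "Cd / (1 + x\<^sup>2) \<le> 2 * Cd * (1 / (1 + \<bar>x\<bar>)\<^sup>2)"
    using a Cd_pos by (simp add: divide_simps add_pos_nonneg)
  with pc_decay show ?thesis by (rule order_trans)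
qed

end

locale csp2 = M: csp \<gamma> \<mu> + N: csp \<gamma> \<nu> for \<gamma> \<mu> \<nu>
begin

lemma ln_int: "integrable lborel (\<lambda>x. ln (poisson_conv \<gamma> \<mu> x) * poisson_conv \<gamma> \<nu> x)"
proof (rule Bochner_Integration.integrable_bound)
  show "integrable lborel (\<lambda>x. 2 * N.Cd * gfun M.Bconst x)"
    using gfun_int[of M.Bconst] unfolding M.Bconst_def by simp
  show "(\<lambda>x. ln (poisson_conv \<gamma> \<mu> x) * poisson_conv \<gamma> \<nu> x) \<in> borel_measurable lborel"
    by measurable
  show "AE x in lborel. norm (ln (poisson_conv \<gamma> \<mu> x) * poisson_conv \<gamma> \<nu> x)
        \<le> norm (2 * N.Cd * gfun M.Bconst x)"
  proof (intro AE_I2)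
    fix x
    have B0: "0 \<le> M.Bconst" unfolding M.Bconst_def by simp
    have g0: "0 \<le> gfun M.Bconst x" unfolding gfun_def by (rule hfun_nonneg) (auto simp: M.Bconst_def)
    have "norm (ln (poisson_conv \<gamma> \<mu> x) * poisson_conv \<gamma> \<nu> x)
        = \<bar>ln (poisson_conv \<gamma> \<mu> x)\<bar> * poisson_conv \<gamma> \<nu> x"
      using N.pc_pos by (simp add: abs_mult abs_of_pos)
    also have "\<dots> \<le> (M.Bconst + 2 * ln (1 + \<bar>x\<bar>)) * (2 * N.Cd * (1 / (1 + \<bar>x\<bar>)\<^sup>2))"
      using M.ln_pc_bound N.pc_decay2 N.pc_pos g0 B0 ln_ge_zero[of "1 + \<bar>x\<bar>"]
        abs_ge_zero[of "ln (poisson_conv \<gamma> \<mu> x)"]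
      by (intro mult_mono) (auto intro: less_imp_le simp: gfun_def hfun_def)
    also have "\<dots> = 2 * N.Cd * gfun M.Bconst x"
      unfolding gfun_def hfun_def by simp
    also have "\<dots> = norm (2 * N.Cd * gfun M.Bconst x)" using g0 N.Cd_pos by simp
    finally show "norm (ln (poisson_conv \<gamma> \<mu> x) * poisson_conv \<gamma> \<nu> x)
        \<le> norm (2 * N.Cd * gfun M.Bconst x)" .
  qed
qed

end




lemma gibbs_pt:
  fixes a b :: real assumes a: "0 < a" and b: "0 < b"
  shows "0 \<le> a * (ln a - ln b) - a + b"
    and "a * (ln a - ln b) - a + b = 0 \<Longrightarrow> a = b"
proof -
  have y: "0 < b / a" using a b by simp
  have l: "ln (b / a) = ln b - ln a" using a b by (simp add: ln_div)
  have "ln (b / a) \<le> b / a - 1" by (rule ln_le_minus_one[OF y])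
  then have "a * ln (b / a) \<le> a * (b / a - 1)" using a by (intro mult_left_mono) auto
  then have "a * (ln b - ln a) \<le> b - a" using a by (simp add: l right_diff_distrib)
  then show "0 \<le> a * (ln a - ln b) - a + b" by (simp add: algebra_simps)
  assume "a * (ln a - ln b) - a + b = 0"
  then have "a * (ln b - ln a) = a * (b / a - 1)" using a by (simp add: algebra_simps)
  then have "ln (b / a) = b / a - 1" using a l by simp
  then have "b / a = 1" by (rule ln_eq_minus_one[OF y])
  then show "a = b" using a by simp
qed

context csp2 begin

definition ff where
  "ff x = poisson_conv \<gamma> \<nu> x * (ln (poisson_conv \<gamma> \<nu> x) - ln (poisson_conv \<gamma> \<mu> x))
          - poisson_conv \<gamma> \<nu> x + poisson_conv \<gamma> \<mu> x"

lemma ff_nonneg: "0 \<le> ff x"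
  unfolding ff_def by (rule gibbs_pt(1)[OF N.pc_pos M.pc_pos])

lemma H_eq: "cauchy_cross_entropy \<gamma> \<nu> \<mu> = - (\<integral>x. ln (poisson_conv \<gamma> \<mu> x) * poisson_conv \<gamma> \<nu> x \<partial>lborel)"
  unfolding cauchy_cross_entropy_def M.loss_eq by simp

lemma ff_int: "integrable lborel ff"
  and ff_integral: "(\<integral>x. ff x \<partial>lborel) = cauchy_cross_entropy \<gamma> \<nu> \<mu> - cauchy_cross_entropy \<gamma> \<nu> \<nu>"
proof -
  interpret NN: csp2 \<gamma> \<nu> \<nu> by unfold_locales
  have e: "ff = (\<lambda>x. (ln (poisson_conv \<gamma> \<nu> x) * poisson_conv \<gamma> \<nu> x
             - ln (poisson_conv \<gamma> \<mu> x) * poisson_conv \<gamma> \<nu> x)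
             + (poisson_conv \<gamma> \<mu> x - poisson_conv \<gamma> \<nu> x))"
    unfolding ff_def by (auto simp: algebra_simps)
  note i = NN.ln_int ln_int M.pc_int N.pc_int
  show "integrable lborel ff" unfolding e using i by auto
  have "(\<integral>x. ff x \<partial>lborel) = (\<integral>x. ln (poisson_conv \<gamma> \<nu> x) * poisson_conv \<gamma> \<nu> x \<partial>lborel)
      - (\<integral>x. ln (poisson_conv \<gamma> \<mu> x) * poisson_conv \<gamma> \<nu> x \<partial>lborel)
      + ((\<integral>x. poisson_conv \<gamma> \<mu> x \<partial>lborel) - (\<integral>x. poisson_conv \<gamma> \<nu> x \<partial>lborel))"
    unfolding e using i by (simp add: Bochner_Integration.integral_add Bochner_Integration.integral_diff)
  also have "\<dots> = cauchy_cross_entropy \<gamma> \<nu> \<mu> - cauchy_cross_entropy \<gamma> \<nu> \<nu>"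
    unfolding H_eq NN.H_eq M.pc_integral N.pc_integral by simp
  finally show "(\<integral>x. ff x \<partial>lborel) = cauchy_cross_entropy \<gamma> \<nu> \<mu> - cauchy_cross_entropy \<gamma> \<nu> \<nu>" .
qed

lemma gibbs: "cauchy_cross_entropy \<gamma> \<nu> \<nu> \<le> cauchy_cross_entropy \<gamma> \<nu> \<mu>"
proof -
  have "0 \<le> (\<integral>x. ff x \<partial>lborel)" by (rule Bochner_Integration.integral_nonneg) (rule ff_nonneg)
  then show ?thesis using ff_integral by simp
qed

lemma gibbs_eq:
  assumes "cauchy_cross_entropy \<gamma> \<nu> \<mu> \<le> cauchy_cross_entropy \<gamma> \<nu> \<nu>"
  shows "AE x in lborel. poisson_conv \<gamma> \<mu> x = poisson_conv \<gamma> \<nu> x"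
proof -
  have "(\<integral>x. ff x \<partial>lborel) = 0" using gibbs assms ff_integral by simp
  then have "AE x in lborel. ff x = 0"
    using integral_nonneg_eq_0_iff_AE[OF ff_int] ff_nonneg by simp
  then show ?thesis
  proof eventually_elim
    case (elim x)
    then show ?case using gibbs_pt(2)[OF N.pc_pos M.pc_pos] unfolding ff_def by metis
  qed
qed

end




lemma exp_int:
  fixes a :: real assumes a: "a > 0"
  shows "has_bochner_integral lborel (\<lambda>s. indicator {0..} s * exp (- s * a)) (1 / a)"
proof (rule has_bochner_integral_nn_integral)
  show "(\<lambda>s. indicator {0..} s * exp (- s * a)) \<in> borel_measurable lborel" by measurable
  show "AE x in lborel. 0 \<le> indicator {0..} x * exp (- x * a)" by auto
  show "0 \<le> 1 / a" using a by simp
  have "(\<integral>\<^sup>+s. ennreal (indicator {0..} s * exp (- s * a)) \<partial>lborel)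
      = (\<integral>\<^sup>+s. ennreal (exp (- s * a)) * indicator {0..} s \<partial>lborel)"
    by (intro nn_integral_cong) (auto split: split_indicator)
  also have "\<dots> = 0 - (- exp (- 0 * a) / a)"
  proof (rule nn_integral_FTC_atLeast)
    show "(\<lambda>s. exp (- s * a)) \<in> borel_measurable borel" by measurable
    show "DERIV (\<lambda>s. - exp (- s * a) / a) x :> exp (- x * a)" for x
      using a by (auto intro!: derivative_eq_intros)
    show "0 \<le> exp (- x * a)" for x by simp
    show "((\<lambda>s. - exp (- s * a) / a) \<longlongrightarrow> 0) at_top" using a by real_asymp
  qed
  also have "\<dots> = ennreal (1 / a)" by simp
  finally show "(\<integral>\<^sup>+s. ennreal (indicator {0..} s * exp (- s * a)) \<partial>lborel) = ennreal (1 / a)" .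
qed

lemma std_normal_cos: "(\<integral>x. std_normal_density x * cos (t * x) \<partial>lborel) = exp (- (t\<^sup>2) / 2)"
proof -
  interpret real_distribution std_normal_distribution by (rule real_dist_normal_dist)
  have "char std_normal_distribution t = complex_of_real (exp (- (t^2) / 2))"
    by (simp add: char_std_normal_distribution)
  then have "Re (char std_normal_distribution t) = exp (- (t^2) / 2)" by simp
  moreover have "Re (char std_normal_distribution t) = (\<integral>x. cos (t * x) \<partial>std_normal_distribution)"
  proof -
    have "integrable std_normal_distribution (\<lambda>x. iexp (t * x))"
      by (rule integrable_iexp) auto
    then have "Re (char std_normal_distribution t) = (\<integral>x. Re (iexp (t * x)) \<partial>std_normal_distribution)"
      unfolding char_def by simp
    also have "\<dots> = (\<integral>x. cos (t * x) \<partial>std_normal_distribution)"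
      by (simp add: Re_exp)
    finally show ?thesis .
  qed
  moreover have "(\<integral>x. cos (t * x) \<partial>std_normal_distribution) = (\<integral>x. std_normal_density x * cos (t * x) \<partial>lborel)"
    by (subst integral_density) auto
  ultimately show ?thesis by simp
qed

lemma gauss_cos_pos:
  fixes s \<xi> :: real
  assumes s: "s > 0"
  shows "0 < (\<integral>y. exp (- s * y\<^sup>2) * cos (\<xi> * y) \<partial>lborel)"
proof -
  define c where "c = 1 / sqrt (2 * s)"
  have c: "c > 0" unfolding c_def using s by simp
  have cs: "s * c\<^sup>2 = 1 / 2" unfolding c_def using s by (simp add: power_divide)
  have "(\<integral>y. exp (- s * y\<^sup>2) * cos (\<xi> * y) \<partial>lborel)
      = \<bar>c\<bar> *\<^sub>R (\<integral>x. exp (- s * (0 + c * x)\<^sup>2) * cos (\<xi> * (0 + c * x)) \<partial>lborel)"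
    using c by (intro lborel_integral_real_affine) simp
  also have "(\<lambda>x. exp (- s * (0 + c * x)\<^sup>2) * cos (\<xi> * (0 + c * x)))
           = (\<lambda>x. sqrt (2 * pi) * (std_normal_density x * cos ((\<xi> * c) * x)))"
  proof
    fix x
    have "- s * (0 + c * x)\<^sup>2 = - (s * c\<^sup>2) * x\<^sup>2" by (simp add: power_mult_distrib)
    then have "exp (- s * (0 + c * x)\<^sup>2) = exp (- x\<^sup>2 / 2)" using cs by simp
    then show "exp (- s * (0 + c * x)\<^sup>2) * cos (\<xi> * (0 + c * x))
           = sqrt (2 * pi) * (std_normal_density x * cos ((\<xi> * c) * x))"
      unfolding std_normal_density_def by (simp add: mult.assoc mult.commute mult.left_commute)
  qed
  also have "\<bar>c\<bar> *\<^sub>R (\<integral>x. sqrt (2 * pi) * (std_normal_density x * cos ((\<xi> * c) * x)) \<partial>lborel)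
      = c * (sqrt (2 * pi) * exp (- ((\<xi> * c)\<^sup>2) / 2))"
    using c std_normal_cos[of "\<xi> * c"] by simp
  finally show ?thesis using c by simp
qed




lemma cos_pk_pos:
  fixes \<gamma> \<xi> :: real assumes g: "\<gamma> > 0"
  shows "0 < (\<integral>y. cos (\<xi> * y) * poisson_kernel \<gamma> y \<partial>lborel)"
proof -
  define k where "k y s = indicator {0..} s * exp (- s * (y\<^sup>2 + \<gamma>\<^sup>2)) * cos (\<xi> * y)" for y s :: real
  have km[measurable]: "case_prod k \<in> borel_measurable (lborel \<Otimes>\<^sub>M lborel)"
    unfolding k_def by measurable
  have dp: "0 < y\<^sup>2 + \<gamma>\<^sup>2" for y using den_pos[OF g] .
  have inner: "(\<integral>s. k y s \<partial>lborel) = cos (\<xi> * y) / (y\<^sup>2 + \<gamma>\<^sup>2)" for y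
  proof -
    have "(\<integral>s. k y s \<partial>lborel) = (\<integral>s. indicator {0..} s * exp (- s * (y\<^sup>2 + \<gamma>\<^sup>2)) \<partial>lborel) * cos (\<xi> * y)"
      unfolding k_def by simp
    also have "\<dots> = cos (\<xi> * y) / (y\<^sup>2 + \<gamma>\<^sup>2)"
      using has_bochner_integral_integral_eq[OF exp_int[OF dp[of y]]] by simp
    finally show ?thesis .
  qed
  have inner_norm: "(\<integral>s. norm (k y s) \<partial>lborel) = \<bar>cos (\<xi> * y)\<bar> / (y\<^sup>2 + \<gamma>\<^sup>2)" for y
  proof -
    have "(\<integral>s. norm (k y s) \<partial>lborel) = (\<integral>s. indicator {0..} s * exp (- s * (y\<^sup>2 + \<gamma>\<^sup>2)) \<partial>lborel) * \<bar>cos (\<xi> * y)\<bar>"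
      unfolding k_def by (simp add: abs_mult)
    also have "\<dots> = \<bar>cos (\<xi> * y)\<bar> / (y\<^sup>2 + \<gamma>\<^sup>2)"
      using has_bochner_integral_integral_eq[OF exp_int[OF dp[of y]]] by simp
    finally show ?thesis .
  qed
  have kint: "integrable (lborel \<Otimes>\<^sub>M lborel) (case_prod k)"
  proof (rule lborel_pair.Fubini_integrable)
    show "case_prod k \<in> borel_measurable (lborel \<Otimes>\<^sub>M lborel)" by (rule km)
    show "integrable lborel (\<lambda>y. \<integral>s. norm (case_prod k (y, s)) \<partial>lborel)"
    proof (rule Bochner_Integration.integrable_bound)
      show "integrable lborel (\<lambda>y. pi / \<gamma> * poisson_kernel \<gamma> y)"
        using pk_int[OF g] by simp
      show "(\<lambda>y. \<integral>s. norm (case_prod k (y, s)) \<partial>lborel) \<in> borel_measurable lborel"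
        by measurable
      show "AE y in lborel. norm (\<integral>s. norm (case_prod k (y, s)) \<partial>lborel) \<le> norm (pi / \<gamma> * poisson_kernel \<gamma> y)"
      proof (intro AE_I2)
        fix y
        have "norm (\<integral>s. norm (case_prod k (y, s)) \<partial>lborel) = \<bar>cos (\<xi> * y)\<bar> / (y\<^sup>2 + \<gamma>\<^sup>2)"
          using inner_norm[of y] dp[of y] by simp
        also have "\<dots> \<le> 1 / (y\<^sup>2 + \<gamma>\<^sup>2)"
          using dp[of y] by (intro divide_right_mono) auto
        also have "\<dots> = norm (pi / \<gamma> * poisson_kernel \<gamma> y)"
          unfolding poisson_kernel_def using g dp[of y] by simp
        finally show "norm (\<integral>s. norm (case_prod k (y, s)) \<partial>lborel) \<le> norm (pi / \<gamma> * poisson_kernel \<gamma> y)" .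
      qed
    qed
    show "AE y in lborel. integrable lborel (\<lambda>s. case_prod k (y, s))"
    proof (intro AE_I2)
      fix y
      show "integrable lborel (\<lambda>s. case_prod k (y, s))"
        unfolding k_def using integrable.intros[OF exp_int[OF dp[of y]]] by simp
    qed
  qed
  define \<Phi> where "\<Phi> s = (\<integral>y. k y s \<partial>lborel)" for s
  have \<Phi>_int: "integrable lborel \<Phi>" unfolding \<Phi>_def using lborel_pair.integrable_snd[OF kint] .
  have \<Phi>_eq: "\<Phi> s = indicator {0..} s * exp (- s * \<gamma>\<^sup>2) * (\<integral>y. exp (- s * y\<^sup>2) * cos (\<xi> * y) \<partial>lborel)" for s
  proof -
    have "\<Phi> s = (\<integral>y. (indicator {0..} s * exp (- s * \<gamma>\<^sup>2)) * (exp (- s * y\<^sup>2) * cos (\<xi> * y)) \<partial>lborel)"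
      unfolding \<Phi>_def k_def
      by (intro Bochner_Integration.integral_cong refl) (simp add: algebra_simps exp_add[symmetric])
    then show ?thesis by simp
  qed
  have \<Phi>_pos: "0 < \<Phi> s" if "s > 0" for s
    unfolding \<Phi>_eq using that gauss_cos_pos[OF that, of \<xi>] by simp
  have \<Phi>_nn: "AE s in lborel. 0 \<le> \<Phi> s"
    using AE_lborel_singleton[of 0]
  proof eventually_elim
    case (elim s)
    then show ?case using \<Phi>_pos[of s] by (cases "s > 0") (auto simp: \<Phi>_eq)
  qed
  have "(\<integral>y. cos (\<xi> * y) * poisson_kernel \<gamma> y \<partial>lborel) = (\<integral>y. \<gamma> / pi * (\<integral>s. k y s \<partial>lborel) \<partial>lborel)"
    unfolding inner poisson_kernel_def using g dp
    by (intro Bochner_Integration.integral_cong refl) (simp add: field_simps)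
  also have "\<dots> = \<gamma> / pi * (\<integral>s. \<Phi> s \<partial>lborel)"
    unfolding \<Phi>_def using lborel_pair.Fubini_integral[OF kint] by simp
  finally have eq: "(\<integral>y. cos (\<xi> * y) * poisson_kernel \<gamma> y \<partial>lborel) = \<gamma> / pi * (\<integral>s. \<Phi> s \<partial>lborel)" .
  have "(\<integral>s. \<Phi> s \<partial>lborel) \<noteq> 0"
  proof
    assume "(\<integral>s. \<Phi> s \<partial>lborel) = 0"
    then have "AE s in lborel. \<Phi> s = 0"
      using integral_nonneg_eq_0_iff_AE[OF \<Phi>_int \<Phi>_nn] by simp
    then have "AE s in lborel. s \<notin> {0<..<(1::real)}"
    proof eventually_elim
      case (elim s) then show ?case using \<Phi>_pos[of s] by force
    qed
    then have "emeasure lborel {0<..<(1::real)} = 0"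
      by (subst AE_iff_measurable[symmetric, where P="\<lambda>s. s \<notin> {0<..<1}"]) auto
    then show False by simp
  qed
  moreover have "0 \<le> (\<integral>s. \<Phi> s \<partial>lborel)" by (rule integral_nonneg_AE[OF \<Phi>_nn])
  ultimately show ?thesis unfolding eq using g by simp
qed




definition chat :: "real \<Rightarrow> real \<Rightarrow> complex" where
  "chat \<gamma> \<xi> = (\<integral>y. iexp (\<xi> * y) * complex_of_real (poisson_kernel \<gamma> y) \<partial>lborel)"

lemma chat_nz: assumes g: "\<gamma> > 0" shows "chat \<gamma> \<xi> \<noteq> 0"
proof -
  have int: "integrable lborel (\<lambda>y. iexp (\<xi> * y) * complex_of_real (poisson_kernel \<gamma> y))"
  proof -
    have "integrable lborel (\<lambda>y. complex_of_real (poisson_kernel \<gamma> y))" using pk_int[OF g] by simp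
    then show ?thesis
      by (rule Bochner_Integration.integrable_bound) (auto simp: norm_mult)
  qed
  have "Re (chat \<gamma> \<xi>) = (\<integral>y. Re (iexp (\<xi> * y) * complex_of_real (poisson_kernel \<gamma> y)) \<partial>lborel)"
    unfolding chat_def by (rule integral_Re[OF int, symmetric])
  also have "\<dots> = (\<integral>y. cos (\<xi> * y) * poisson_kernel \<gamma> y \<partial>lborel)"
    by (simp add: Re_exp)
  finally have "Re (chat \<gamma> \<xi>) > 0" using cos_pk_pos[OF g] by simp
  then show ?thesis by auto
qed

lemma iexp_shift: "iexp (\<xi> * (t + x)) = iexp (\<xi> * t) * iexp (\<xi> * x)"
  by (simp add: distrib_left exp_add[symmetric] algebra_simps)

context csp begin

lemma pc_fourier:
  "(\<integral>x. iexp (\<xi> * x) * complex_of_real (poisson_conv \<gamma> \<mu> x) \<partial>lborel) = char \<mu> \<xi> * chat \<gamma> \<xi>"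
proof -
  interpret pair_sigma_finite lborel \<mu> by unfold_locales
  define f where "f x t = iexp (\<xi> * x) * complex_of_real (poisson_kernel \<gamma> (x - t))" for x t
  have fm[measurable]: "case_prod f \<in> borel_measurable (lborel \<Otimes>\<^sub>M \<mu>)"
    unfolding f_def by measurable
  have fint: "integrable (lborel \<Otimes>\<^sub>M \<mu>) (case_prod f)"
  proof (rule Fubini_integrable)
    show "case_prod f \<in> borel_measurable (lborel \<Otimes>\<^sub>M \<mu>)" by (rule fm)
    have "(\<lambda>x. \<integral>t. norm (case_prod f (x, t)) \<partial>\<mu>) = poisson_conv \<gamma> \<mu>"
      unfolding f_def poisson_conv_def using pk_pos[OF gpos]
      by (intro ext Bochner_Integration.integral_cong refl) (simp add: norm_mult less_imp_le)
    then show "integrable lborel (\<lambda>x. \<integral>t. norm (case_prod f (x, t)) \<partial>\<mu>)"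
      using pc_int by simp
    show "AE x in lborel. integrable \<mu> (\<lambda>t. case_prod f (x, t))"
      unfolding f_def using pk_integrable by (intro AE_I2) auto
  qed
  have inner: "(\<integral>x. f x t \<partial>lborel) = iexp (\<xi> * t) * chat \<gamma> \<xi>" for t
  proof -
    have "(\<integral>x. f x t \<partial>lborel) = (\<integral>x. f (t + x) t \<partial>lborel)"
      using lborel_integral_real_affine[of 1 "\<lambda>x. f x t" t] by simp
    also have "\<dots> = (\<integral>x. iexp (\<xi> * t) * (iexp (\<xi> * x) * complex_of_real (poisson_kernel \<gamma> x)) \<partial>lborel)"
      unfolding f_def
      by (intro Bochner_Integration.integral_cong refl)
         (simp only: add_diff_cancel_left' iexp_shift mult.assoc)
    also have "\<dots> = iexp (\<xi> * t) * chat \<gamma> \<xi>"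
      unfolding chat_def by simp
    finally show ?thesis .
  qed
  have "(\<integral>x. iexp (\<xi> * x) * complex_of_real (poisson_conv \<gamma> \<mu> x) \<partial>lborel)
      = (\<integral>x. (\<integral>t. f x t \<partial>\<mu>) \<partial>lborel)"
    unfolding f_def poisson_conv_def by simp
  also have "\<dots> = (\<integral>t. (\<integral>x. f x t \<partial>lborel) \<partial>\<mu>)"
    using Fubini_integral[OF fint] by simp
  also have "\<dots> = (\<integral>t. iexp (\<xi> * t) * chat \<gamma> \<xi> \<partial>\<mu>)" by (simp add: inner)
  also have "\<dots> = char \<mu> \<xi> * chat \<gamma> \<xi>" unfolding char_def by simp
  finally show ?thesis .
qed

lemma real_dist: "real_distribution \<mu>"
  by unfold_locales (rule sets_eq)

end

context csp2 begin

lemma inj: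
  assumes ae: "AE x in lborel. poisson_conv \<gamma> \<mu> x = poisson_conv \<gamma> \<nu> x"
  shows "\<mu> = \<nu>"
proof (rule Levy_uniqueness[OF M.real_dist N.real_dist])
  show "char \<mu> = char \<nu>"
  proof
    fix \<xi>
    have "char \<mu> \<xi> * chat \<gamma> \<xi> = (\<integral>x. iexp (\<xi> * x) * complex_of_real (poisson_conv \<gamma> \<mu> x) \<partial>lborel)"
      by (rule M.pc_fourier[symmetric])
    also have "\<dots> = (\<integral>x. iexp (\<xi> * x) * complex_of_real (poisson_conv \<gamma> \<nu> x) \<partial>lborel)"
      using ae by (intro integral_cong_AE) auto
    also have "\<dots> = char \<nu> \<xi> * chat \<gamma> \<xi>" by (rule N.pc_fourier)
    finally show "char \<mu> \<xi> = char \<nu> \<xi>" using chat_nz[OF M.gpos] by simp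
  qed
qed

end


theorem mainTheorem4:
  fixes \<gamma> :: real and \<nu> :: "real measure"
  assumes "\<gamma> > 0" and "\<nu> \<in> cs_prob"
  shows "{\<mu> \<in> cs_prob. \<forall>\<mu>' \<in> cs_prob.
            cauchy_cross_entropy \<gamma> \<nu> \<mu> \<le> cauchy_cross_entropy \<gamma> \<nu> \<mu>'} = {\<nu>}"
proof -
  have c2: "csp2 \<gamma> \<mu> \<nu>" if "\<mu> \<in> cs_prob" for \<mu>
    using assms that by (simp add: csp2_def csp_def)
  have "\<nu> \<in> {\<mu> \<in> cs_prob. \<forall>\<mu>' \<in> cs_prob.
            cauchy_cross_entropy \<gamma> \<nu> \<mu> \<le> cauchy_cross_entropy \<gamma> \<nu> \<mu>'}"
    using assms(2) csp2.gibbs[OF c2] by blast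
  moreover have "\<mu> = \<nu>" if "\<mu> \<in> {\<mu> \<in> cs_prob. \<forall>\<mu>' \<in> cs_prob.
            cauchy_cross_entropy \<gamma> \<nu> \<mu> \<le> cauchy_cross_entropy \<gamma> \<nu> \<mu>'}" for \<mu>
  proof -
    from that have m: "\<mu> \<in> cs_prob"
      and le: "cauchy_cross_entropy \<gamma> \<nu> \<mu> \<le> cauchy_cross_entropy \<gamma> \<nu> \<nu>"
      using assms(2) by auto
    show ?thesis using csp2.inj[OF c2[OF m] csp2.gibbs_eq[OF c2[OF m] le]] .
  qed
  ultimately show ?thesis by blast
qed

end
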